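(* Let $\Delta$ be a local derivation of $\mathcal{S}$ with $\Delta(G_0)=0$, and let $m\in\mathbb{Z}\setminus\{0\}$. Then $\Delta(G_m)$ lies in the span of $\{G_{km}:k\in\mathbb{Z}\}$; that is, in the basis expansion of $\Delta(G_m)$ all coefficients of the $L_k$ vanish, and only $G_n$ with $n$ divisible by $m$ occur.
   Context: $\mathcal{S}$ is the centerless super Virasoro algebra: the Lie superalgebra over $\mathbb{C}$ with basis $\{L_m,G_n: m,n\in\mathbb{Z}\}$, $L_m$ even, $G_n$ odd, and brackets $[L_m,L_n]=(m-n)L_{m+n}$, $[L_m,G_r]=(\frac m2-r)G_{m+r}$, $[G_r,G_s]=2L_{r+s}$. A homogeneous linear map $D$ of parity $|D|$ is a derivation if $D([x,y])=[D(x),y]+(-1)^{|D||x|}[x,D(y)]$ for homogeneous $x,y$; derivations are sums of even and odd ones. A linear map $\Delta:\mathcal{S}\to\mathcal{S}$ is a local derivation if for every $x$ there is a derivation $D_x$ with $\Delta(x)=D_x(x)$. *)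

theory Defs
  imports Complex_Main
begin

text \<open>Elements of the centerless super Virasoro algebra S are represented by
  pairs (a, b) of coefficient functions: x = sum_m a m L_m + sum_n b n G_n,
  with a and b finitely supported.\<close>

type_synonym sv = "(int \<Rightarrow> complex) \<times> (int \<Rightarrow> complex)"

definition SV :: "sv set" where
  "SV = {(a, b). finite {m. a m \<noteq> 0} \<and> finite {n. b n \<noteq> 0}}"

definition sv_zero :: sv where
  "sv_zero = ((\<lambda>_. 0), (\<lambda>_. 0))"

definition sv_add :: "sv \<Rightarrow> sv \<Rightarrow> sv" where
  "sv_add x y = ((\<lambda>k. fst x k + fst y k), (\<lambda>k. snd x k + snd y k))"

definition sv_smul :: "complex \<Rightarrow> sv \<Rightarrow> sv" where
  "sv_smul c x = ((\<lambda>k. c * fst x k), (\<lambda>k. c * snd x k))"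

definition delta :: "int \<Rightarrow> int \<Rightarrow> complex" where
  "delta n = (\<lambda>k. if k = n then 1 else 0)"

definition Lb :: "int \<Rightarrow> sv" where "Lb m = (delta m, (\<lambda>_. 0))"
definition Gb :: "int \<Rightarrow> sv" where "Gb n = ((\<lambda>_. 0), delta n)"

text \<open>Bilinear extension of
  [L_m,L_n] = (m-n)L_{m+n}, [L_m,G_r] = (m/2-r)G_{m+r},
  [G_r,L_m] = -(m/2-r)G_{m+r}, [G_r,G_s] = 2L_{r+s}.\<close>
definition sv_br :: "sv \<Rightarrow> sv \<Rightarrow> sv" where
  "sv_br x y =
    ((\<lambda>k. (\<Sum>m\<in>{m. fst x m \<noteq> 0}. fst x m * fst y (k - m) * of_int (m - (k - m)))
        + (\<Sum>r\<in>{r. snd x r \<noteq> 0}. snd x r * snd y (k - r) * 2)),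
     (\<lambda>k. (\<Sum>m\<in>{m. fst x m \<noteq> 0}. fst x m * snd y (k - m) * (of_int m / 2 - of_int (k - m)))
        - (\<Sum>r\<in>{r. snd x r \<noteq> 0}. snd x r * fst y (k - r) * (of_int (k - r) / 2 - of_int r))))"

definition sv_even :: "sv \<Rightarrow> bool" where "sv_even x \<longleftrightarrow> x \<in> SV \<and> snd x = (\<lambda>_. 0)"
definition sv_odd :: "sv \<Rightarrow> bool" where "sv_odd x \<longleftrightarrow> x \<in> SV \<and> fst x = (\<lambda>_. 0)"

definition sv_linear :: "(sv \<Rightarrow> sv) \<Rightarrow> bool" where
  "sv_linear D \<longleftrightarrow> (\<forall>x\<in>SV. D x \<in> SV)
     \<and> (\<forall>x\<in>SV. \<forall>y\<in>SV. D (sv_add x y) = sv_add (D x) (D y))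
     \<and> (\<forall>c. \<forall>x\<in>SV. D (sv_smul c x) = sv_smul c (D x))"

definition even_der :: "(sv \<Rightarrow> sv) \<Rightarrow> bool" where
  "even_der D \<longleftrightarrow> sv_linear D
     \<and> (\<forall>x. sv_even x \<longrightarrow> sv_even (D x)) \<and> (\<forall>x. sv_odd x \<longrightarrow> sv_odd (D x))
     \<and> (\<forall>x y. (sv_even x \<or> sv_odd x) \<longrightarrow> (sv_even y \<or> sv_odd y) \<longrightarrow>
           D (sv_br x y) = sv_add (sv_br (D x) y) (sv_br x (D y)))"

definition odd_der :: "(sv \<Rightarrow> sv) \<Rightarrow> bool" where
  "odd_der D \<longleftrightarrow> sv_linear D
     \<and> (\<forall>x. sv_even x \<longrightarrow> sv_odd (D x)) \<and> (\<forall>x. sv_odd x \<longrightarrow> sv_even (D x))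
     \<and> (\<forall>x y. sv_even x \<longrightarrow> (sv_even y \<or> sv_odd y) \<longrightarrow>
           D (sv_br x y) = sv_add (sv_br (D x) y) (sv_br x (D y)))
     \<and> (\<forall>x y. sv_odd x \<longrightarrow> (sv_even y \<or> sv_odd y) \<longrightarrow>
           D (sv_br x y) = sv_add (sv_br (D x) y) (sv_smul (-1) (sv_br x (D y))))"

definition sv_der :: "(sv \<Rightarrow> sv) \<Rightarrow> bool" where
  "sv_der D \<longleftrightarrow> (\<exists>D0 D1. even_der D0 \<and> odd_der D1 \<and> (\<forall>x\<in>SV. D x = sv_add (D0 x) (D1 x)))"

definition local_der :: "(sv \<Rightarrow> sv) \<Rightarrow> bool" where
  "local_der \<Delta> \<longleftrightarrow> sv_linear \<Delta> \<and> (\<forall>x\<in>SV. \<exists>D. sv_der D \<and> \<Delta> x = D x)"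

end

theory Submission
  imports Defs
begin

lemma delta_supp[simp]: "{r. delta n r \<noteq> 0} = {n}"
  by (auto simp: delta_def)

lemma zero_supp[simp]: "{m. (\<lambda>_. 0::complex) m \<noteq> 0} = {}" by simp

lemma Gb_SV[simp]: "Gb n \<in> SV" by (simp add: Gb_def SV_def)
lemma Lb_SV[simp]: "Lb n \<in> SV" by (simp add: Lb_def SV_def)

lemma sum_delta_supp:
  assumes "finite {m. a m \<noteq> 0}"
  shows "(\<Sum>m\<in>{m. a m \<noteq> 0}. a m * delta n (k - m) * h m) = a (k - n) * h (k - n)"
proof -
  have "(\<Sum>m\<in>{m. a m \<noteq> 0}. a m * delta n (k - m) * h m)
      = (\<Sum>m\<in>{m. a m \<noteq> 0}. if m = k - n then a m * h m else 0)"
    by (rule sum.cong) (auto simp: delta_def)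
  also have "\<dots> = (if k - n \<in> {m. a m \<noteq> 0} then a (k - n) * h (k - n) else 0)"
    using assms by (rule sum.delta)
  also have "\<dots> = a (k - n) * h (k - n)" by auto
  finally show ?thesis .
qed

lemma br_x_G:
  assumes "x \<in> SV"
  shows "sv_br x (Gb n) = ((\<lambda>k. 2 * snd x (k - n)),
           (\<lambda>k. fst x (k - n) * (of_int (k - n) / 2 - of_int n)))"
proof -
  obtain a b where x: "x = (a, b)" by fastforce
  have fa: "finite {m. a m \<noteq> 0}" and fb: "finite {m. b m \<noteq> 0}" using assms x by (auto simp: SV_def)
  have 1: "(\<Sum>r\<in>{r. b r \<noteq> 0}. b r * delta n (k - r) * 2) = 2 * b (k - n)" for k
    using sum_delta_supp[OF fb, of n k "\<lambda>_. 2"] by simp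
  have 2: "(\<Sum>m\<in>{m. a m \<noteq> 0}. a m * delta n (k - m) * (of_int m / 2 - of_int (k - m)))
     = a (k - n) * (of_int (k - n) / 2 - of_int n)" for k
    using sum_delta_supp[OF fa, of n k "\<lambda>m. of_int m / 2 - of_int (k - m)"] by simp
  show ?thesis unfolding x sv_br_def Gb_def using 1 2 by simp
qed

lemma br_x_L:
  assumes "x \<in> SV"
  shows "sv_br x (Lb n) = ((\<lambda>k. fst x (k - n) * of_int ((k - n) - n)),
           (\<lambda>k. - (snd x (k - n) * (of_int n / 2 - of_int (k - n)))))"
proof -
  obtain a b where x: "x = (a, b)" by fastforce
  have fa: "finite {m. a m \<noteq> 0}" and fb: "finite {m. b m \<noteq> 0}" using assms x by (auto simp: SV_def)
  have 1: "(\<Sum>m\<in>{m. a m \<noteq> 0}. a m * delta n (k - m) * of_int (m - (k - m))) = a (k - n) * of_int ((k - n) - n)" for k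
    using sum_delta_supp[OF fa, of n k "\<lambda>m. of_int (m - (k - m))"] by simp
  have 2: "(\<Sum>r\<in>{r. b r \<noteq> 0}. b r * delta n (k - r) * (of_int (k - r) / 2 - of_int r))
     = b (k - n) * (of_int n / 2 - of_int (k - n))" for k
    using sum_delta_supp[OF fb, of n k "\<lambda>r. of_int (k - r) / 2 - of_int r"] by simp
  show ?thesis unfolding x sv_br_def Lb_def using 1 2 by simp
qed

lemma br_G_x:
  "sv_br (Gb n) x = ((\<lambda>k. 2 * snd x (k - n)),
           (\<lambda>k. - (fst x (k - n) * (of_int (k - n) / 2 - of_int n))))"
  unfolding sv_br_def Gb_def by (auto simp: delta_def)

lemma br_L_x:
  "sv_br (Lb n) x = ((\<lambda>k. fst x (k - n) * of_int (n - (k - n))),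
           (\<lambda>k. snd x (k - n) * (of_int n / 2 - of_int (k - n))))"
  unfolding sv_br_def Lb_def by (auto simp: delta_def)

lemma GG: "sv_br (Gb r) (Gb s) = sv_smul 2 (Lb (r + s))"
  unfolding br_G_x by (auto simp: sv_smul_def Lb_def Gb_def delta_def)

lemma LG: "sv_br (Lb j) (Gb k) = sv_smul (of_int j / 2 - of_int k) (Gb (j + k))"
  unfolding br_L_x by (auto simp: sv_smul_def Gb_def delta_def)

lemma Gb_odd[simp]: "sv_odd (Gb n)"
proof -
  have "Gb n \<in> SV" by simp
  thus ?thesis by (simp add: sv_odd_def Gb_def)
qed
lemma Lb_even[simp]: "sv_even (Lb n)"
proof -
  have "Lb n \<in> SV" by simp
  thus ?thesis by (simp add: sv_even_def Lb_def)
qed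

lemma lin_smul: "sv_linear D \<Longrightarrow> x \<in> SV \<Longrightarrow> D (sv_smul c x) = sv_smul c (D x)"
  by (simp add: sv_linear_def)
lemma lin_add: "sv_linear D \<Longrightarrow> x \<in> SV \<Longrightarrow> y \<in> SV \<Longrightarrow> D (sv_add x y) = sv_add (D x) (D y)"
  by (simp add: sv_linear_def)
lemma lin_SV: "sv_linear D \<Longrightarrow> x \<in> SV \<Longrightarrow> D x \<in> SV"
  by (simp add: sv_linear_def)

lemma ev_lin: "even_der D \<Longrightarrow> sv_linear D" by (simp add: even_der_def)
lemma od_lin: "odd_der D \<Longrightarrow> sv_linear D" by (simp add: odd_der_def)

lemma ev_G: "even_der D \<Longrightarrow> fst (D (Gb n)) = (\<lambda>_. 0)"
  unfolding even_der_def sv_odd_def[symmetric] using Gb_odd by (metis sv_odd_def)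
lemma ev_L: "even_der D \<Longrightarrow> snd (D (Lb n)) = (\<lambda>_. 0)"
  unfolding even_der_def using Lb_even by (metis sv_even_def)
lemma od_G: "odd_der D \<Longrightarrow> snd (D (Gb n)) = (\<lambda>_. 0)"
  unfolding odd_der_def using Gb_odd by (metis sv_even_def)
lemma od_L: "odd_der D \<Longrightarrow> fst (D (Lb n)) = (\<lambda>_. 0)"
  unfolding odd_der_def using Lb_even by (metis sv_odd_def)

lemma ev_leib: "even_der D \<Longrightarrow> (sv_even x \<or> sv_odd x) \<Longrightarrow> (sv_even y \<or> sv_odd y) \<Longrightarrow>
   D (sv_br x y) = sv_add (sv_br (D x) y) (sv_br x (D y))"
  unfolding even_der_def by blast
lemma od_leib_e: "odd_der D \<Longrightarrow> sv_even x \<Longrightarrow> (sv_even y \<or> sv_odd y) \<Longrightarrow>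
   D (sv_br x y) = sv_add (sv_br (D x) y) (sv_br x (D y))"
  unfolding odd_der_def by blast
lemma od_leib_o: "odd_der D \<Longrightarrow> sv_odd x \<Longrightarrow> (sv_even y \<or> sv_odd y) \<Longrightarrow>
   D (sv_br x y) = sv_add (sv_br (D x) y) (sv_smul (-1) (sv_br x (D y)))"
  unfolding odd_der_def by blast

lemma D0_fact:
  assumes D: "even_der D"
  shows "(of_int k - of_int m) * snd (D (Gb m)) k = (of_int k - 3 * of_int m) * snd (D (Gb 0)) (k - m)"
proof -
  have lin: "sv_linear D" using D by (rule ev_lin)
  define p where "p = D (Gb 0)"
  have pSV: "p \<in> SV" unfolding p_def using lin by (simp add: lin_SV)
  have fp: "fst p = (\<lambda>_. 0)" unfolding p_def using D by (rule ev_G)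
  have "D (sv_br (Gb 0) (Gb 0)) = sv_add (sv_br p (Gb 0)) (sv_br (Gb 0) p)"
    unfolding p_def using D by (simp add: ev_leib)
  hence e1: "sv_smul 2 (D (Lb 0)) = sv_add (sv_br p (Gb 0)) (sv_br (Gb 0) p)"
    by (simp add: GG lin_smul[OF lin])
  have A: "fst (D (Lb 0)) i = 2 * snd p i" for i
  proof -
    have "fst (sv_smul 2 (D (Lb 0))) i = fst (sv_add (sv_br p (Gb 0)) (sv_br (Gb 0) p)) i"
      by (simp only: e1)
    thus ?thesis by (simp add: sv_smul_def sv_add_def br_x_G[OF pSV] br_G_x)
  qed
  have "D (sv_br (Lb 0) (Gb m)) = sv_add (sv_br (D (Lb 0)) (Gb m)) (sv_br (Lb 0) (D (Gb m)))"
    using D by (simp add: ev_leib)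
  hence e2: "sv_smul (- of_int m) (D (Gb m)) = sv_add (sv_br (D (Lb 0)) (Gb m)) (sv_br (Lb 0) (D (Gb m)))"
    by (simp add: LG lin_smul[OF lin])
  have "snd (sv_smul (- of_int m) (D (Gb m))) k = snd (sv_add (sv_br (D (Lb 0)) (Gb m)) (sv_br (Lb 0) (D (Gb m)))) k"
    by (simp only: e2)
  hence "- of_int m * snd (D (Gb m)) k = 2 * snd p (k - m) * (of_int (k - m) / 2 - of_int m)
          + snd (D (Gb m)) k * (- of_int k)"
    using lin by (simp add: sv_smul_def sv_add_def br_x_G lin_SV br_L_x A)
  thus ?thesis unfolding p_def by (simp add: of_int_diff field_simps) algebra
qed

lemma D1_fact:
  assumes D: "odd_der D"
  shows "(of_int k - of_int m) * fst (D (Gb m)) k = (of_int k - of_int m) * fst (D (Gb 0)) (k - m)"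
proof -
  have lin: "sv_linear D" using D by (rule od_lin)
  define q where "q = D (Gb 0)"
  have qSV: "q \<in> SV" unfolding q_def using lin by (simp add: lin_SV)
  have "D (sv_br (Gb 0) (Gb 0)) = sv_add (sv_br q (Gb 0)) (sv_smul (-1) (sv_br (Gb 0) q))"
    unfolding q_def using D by (simp add: od_leib_o)
  hence e1: "sv_smul 2 (D (Lb 0)) = sv_add (sv_br q (Gb 0)) (sv_smul (-1) (sv_br (Gb 0) q))"
    by (simp add: GG lin_smul[OF lin])
  have A: "snd (D (Lb 0)) i = fst q i * of_int i / 2" for i
  proof -
    have "snd (sv_smul 2 (D (Lb 0))) i = snd (sv_add (sv_br q (Gb 0)) (sv_smul (-1) (sv_br (Gb 0) q))) i"
      by (simp only: e1)
    thus ?thesis by (simp add: sv_smul_def sv_add_def br_x_G[OF qSV] br_G_x algebra_simps)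
  qed
  have "D (sv_br (Lb 0) (Gb m)) = sv_add (sv_br (D (Lb 0)) (Gb m)) (sv_br (Lb 0) (D (Gb m)))"
    using D by (simp add: od_leib_e)
  hence e2: "sv_smul (- of_int m) (D (Gb m)) = sv_add (sv_br (D (Lb 0)) (Gb m)) (sv_br (Lb 0) (D (Gb m)))"
    by (simp add: LG lin_smul[OF lin])
  have "fst (sv_smul (- of_int m) (D (Gb m))) k = fst (sv_add (sv_br (D (Lb 0)) (Gb m)) (sv_br (Lb 0) (D (Gb m)))) k"
    by (simp only: e2)
  hence "- of_int m * fst (D (Gb m)) k = 2 * (fst q (k - m) * of_int (k - m) / 2)
          + fst (D (Gb m)) k * (- of_int k)"
    using lin by (simp add: sv_smul_def sv_add_def br_x_G lin_SV br_L_x A)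
  thus ?thesis unfolding q_def by (simp add: of_int_diff field_simps) algebra
qed

lemma star1:
  assumes D: "odd_der D"
  shows "(of_int j / 2 - of_int k) * fst (D (Gb (j + k))) (j + k)
     = 2 * snd (D (Lb j)) j + of_int (j - k) * fst (D (Gb k)) k"
proof -
  have lin: "sv_linear D" using D by (rule od_lin)
  have "D (sv_br (Lb j) (Gb k)) = sv_add (sv_br (D (Lb j)) (Gb k)) (sv_br (Lb j) (D (Gb k)))"
    using D by (simp add: od_leib_e)
  hence e: "sv_smul (of_int j / 2 - of_int k) (D (Gb (j + k))) = sv_add (sv_br (D (Lb j)) (Gb k)) (sv_br (Lb j) (D (Gb k)))"
    by (simp add: LG lin_smul[OF lin])
  have "fst (sv_smul (of_int j / 2 - of_int k) (D (Gb (j + k)))) (j + k) = fst (sv_add (sv_br (D (Lb j)) (Gb k)) (sv_br (Lb j) (D (Gb k)))) (j + k)"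
    by (simp only: e)
  thus ?thesis using lin by (simp add: sv_smul_def sv_add_def br_x_G lin_SV br_L_x algebra_simps)
qed

lemma star3:
  assumes D: "odd_der D"
  shows "2 * snd (D (Lb (r + s))) (r + s)
     = fst (D (Gb r)) r * (of_int r / 2 - of_int s) + fst (D (Gb s)) s * (of_int s / 2 - of_int r)"
proof -
  have lin: "sv_linear D" using D by (rule od_lin)
  have "D (sv_br (Gb r) (Gb s)) = sv_add (sv_br (D (Gb r)) (Gb s)) (sv_smul (-1) (sv_br (Gb r) (D (Gb s))))"
    using D by (simp add: od_leib_o)
  hence e: "sv_smul 2 (D (Lb (r + s))) = sv_add (sv_br (D (Gb r)) (Gb s)) (sv_smul (-1) (sv_br (Gb r) (D (Gb s))))"
    by (simp add: GG lin_smul[OF lin])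
  have "snd (sv_smul 2 (D (Lb (r + s)))) (r + s) = snd (sv_add (sv_br (D (Gb r)) (Gb s)) (sv_smul (-1) (sv_br (Gb r) (D (Gb s))))) (r + s)"
    by (simp only: e)
  thus ?thesis using lin by (simp add: sv_smul_def sv_add_def br_x_G lin_SV br_G_x algebra_simps)
qed

lemma D1_diag:
  assumes D: "odd_der D" and m: "m \<noteq> 0"
  shows "fst (D (Gb m)) m = fst (D (Gb 0)) 0"
proof -
  define F where "F n = fst (D (Gb n)) n" for n
  define g where "g n = snd (D (Lb n)) n" for n
  define M where "M = (of_int m :: complex)"
  have M0: "M \<noteq> 0" using m by (simp add: M_def)
  have E1a: "2 * g (-m) = F 0 * M - F (-m) * M / 2"
    using star3[OF D, of 0 "-m"] by (simp add: F_def g_def M_def algebra_simps)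
  have E2: "M / 2 * F (-2*m) = 2 * g (-m)"
    using star1[OF D, of "-m" "-m"] by (simp add: F_def g_def M_def algebra_simps)
  have E3: "- (3 * M / 2) * F 0 = 2 * g (-m) - 2 * M * F m"
    using star1[OF D, of "-m" "m"] by (simp add: F_def g_def M_def algebra_simps)
  have E1b: "2 * g (-2*m) = 2 * M * F 0 - M * F (-2*m)"
    using star3[OF D, of 0 "-2*m"] by (simp add: F_def g_def M_def algebra_simps)
  have E4: "- 2 * M * F (-m) = 2 * g (-2*m) - 3 * M * F m"
    using star1[OF D, of "-2*m" "m"] by (simp add: F_def g_def M_def algebra_simps)
  have "M * (F m - F 0) = 0"
    using E1a E2 E3 E1b E4 by algebra
  hence "F m = F 0" using M0 by simp
  thus ?thesis by (simp add: F_def)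
qed

lemma D1_all:
  assumes D: "odd_der D" and m: "m \<noteq> 0"
  shows "fst (D (Gb m)) i = fst (D (Gb 0)) (i - m)"
proof (cases "i = m")
  case True thus ?thesis using D1_diag[OF D m] by simp
next
  case False
  hence "(of_int i - of_int m :: complex) \<noteq> 0" by simp
  thus ?thesis using D1_fact[OF D, of i m] by simp
qed

fun Kseq :: "(nat \<Rightarrow> complex) \<Rightarrow> nat \<Rightarrow> complex" where
  "Kseq W 0 = 1"
| "Kseq W (Suc t) = - Kseq W t / W (Suc t)"

lemma core:
  fixes U W :: "nat \<Rightarrow> complex"
  assumes h: "\<forall>c. c \<noteq> 0 \<longrightarrow> (\<exists>A. U 0 = c * A 0 \<and> (\<forall>t. U (Suc t) = W (Suc t) * A t + c * A (Suc t)) \<and> A N = 0)"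
    and w: "\<forall>t. W t \<noteq> 0"
  shows "U 0 = 0"
proof -
  define P where "P c = (\<Sum>t\<le>N. Kseq W t * U t * c ^ t)" for c :: complex
  have P0: "P c = 0" if c: "c \<noteq> 0" for c
  proof -
    obtain A where A0: "U 0 = c * A 0" and AS: "\<forall>t. U (Suc t) = W (Suc t) * A t + c * A (Suc t)"
      and AN: "A N = 0" using h c by blast
    have "(\<Sum>t\<le>n. Kseq W t * U t * c ^ t) = Kseq W n * c ^ Suc n * A n" for n
    proof (induction n)
      case 0 thus ?case using A0 by simp
    next
      case (Suc n)
      have wn: "W (Suc n) \<noteq> 0" using w by blast
      have "(\<Sum>t\<le>Suc n. Kseq W t * U t * c ^ t) = Kseq W n * c ^ Suc n * A n
           + Kseq W (Suc n) * (W (Suc n) * A n + c * A (Suc n)) * c ^ Suc n"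
        using Suc AS by simp
      also have "\<dots> = Kseq W (Suc n) * c ^ Suc (Suc n) * A (Suc n)"
        using wn by (simp add: field_simps)
      finally show ?case .
    qed
    thus ?thesis using AN by (simp add: P_def)
  qed
  have "isCont P 0" unfolding P_def by (intro continuous_intros)
  hence t1: "(P \<longlongrightarrow> P 0) (at 0)" by (simp add: isCont_def)
  have ev: "eventually (\<lambda>x. 0 = P x) (at (0::complex))"
    unfolding eventually_at using P0 by (auto intro!: exI[of _ 1])
  have t2: "(P \<longlongrightarrow> 0) (at 0)"
    by (rule Lim_transform_eventually[OF tendsto_const ev])
  have "P 0 = 0" using tendsto_unique[OF at_neq_bot t1 t2] .
  moreover have "P 0 = U 0"
    unfolding P_def by (induction N) auto
  ultimately show ?thesis by simp
qed

lemma zlemma: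
  fixes u w :: "int \<Rightarrow> complex"
  assumes fu: "finite {k. u k \<noteq> 0}" and w: "\<forall>k. w k \<noteq> 0"
    and h: "\<forall>c. c \<noteq> 0 \<longrightarrow> (\<exists>a. finite {k. a k \<noteq> 0} \<and> (\<forall>k. u k = w k * a (k - 1) + c * a k))"
  shows "u k = 0"
proof (rule ccontr)
  assume uk: "u k \<noteq> 0"
  define S where "S = {k. u k \<noteq> 0}"
  have fS: "finite S" and neS: "S \<noteq> {}" using fu uk by (auto simp: S_def)
  define i0 where "i0 = Min S"
  define T where "T = Max S"
  have i0S: "i0 \<in> S" unfolding i0_def using fS neS by simp
  have below: "u k = 0" if "k < i0" for k
    using Min_le[OF fS, of k] that unfolding S_def i0_def by force
  have above: "u k = 0" if "k > T" for k
    using Max_ge[OF fS, of k] that unfolding S_def T_def by force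
  have iT: "i0 \<le> T" unfolding i0_def T_def using fS neS by simp
  have "u i0 = 0"
  proof -
    have "u (i0 + int 0) = 0"
    proof (rule core[where W = "\<lambda>t. w (i0 + int t)" and N = "nat (T - i0)"])
      show "\<forall>t. w (i0 + int t) \<noteq> 0" using w by blast
      show "\<forall>c. c \<noteq> 0 \<longrightarrow> (\<exists>A. u (i0 + int 0) = c * A 0 \<and>
          (\<forall>t. u (i0 + int (Suc t)) = w (i0 + int (Suc t)) * A t + c * A (Suc t)) \<and> A (nat (T - i0)) = 0)"
      proof (intro allI impI)
        fix c :: complex assume c: "c \<noteq> 0"
        obtain a where fa: "finite {k. a k \<noteq> 0}" and eq: "\<forall>k. u k = w k * a (k - 1) + c * a k"
          using h c by blast
        have lowa: "a k = 0" if "k < i0" for k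
        proof (rule ccontr)
          assume ak: "a k \<noteq> 0"
          define B where "B = {k. k < i0 \<and> a k \<noteq> 0}"
          have fB: "finite B" using fa by (rule rev_finite_subset) (auto simp: B_def)
          have kB: "k \<in> B" using ak that by (simp add: B_def)
          define k1 where "k1 = Min B"
          have k1B: "k1 \<in> B" unfolding k1_def using fB kB by (metis Min_in empty_iff)
          have "a (k1 - 1) = 0"
          proof (rule ccontr)
            assume "a (k1 - 1) \<noteq> 0"
            hence "k1 - 1 \<in> B" using k1B by (simp add: B_def)
            hence "k1 \<le> k1 - 1" unfolding k1_def using fB by (rule Min_le[rotated])
            thus False by simp
          qed
          hence "u k1 = c * a k1" using eq by simp
          moreover have "u k1 = 0" using k1B below by (simp add: B_def)
          ultimately show False using c k1B by (simp add: B_def)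
        qed
        have upa: "a k = 0" if "k \<ge> T" for k
        proof (rule ccontr)
          assume ak: "a k \<noteq> 0"
          define B where "B = {k. k \<ge> T \<and> a k \<noteq> 0}"
          have fB: "finite B" using fa by (rule rev_finite_subset) (auto simp: B_def)
          have kB: "k \<in> B" using ak that by (simp add: B_def)
          define k1 where "k1 = Max B"
          have k1B: "k1 \<in> B" unfolding k1_def using fB kB by (metis Max_in empty_iff)
          have "a (k1 + 1) = 0"
          proof (rule ccontr)
            assume "a (k1 + 1) \<noteq> 0"
            hence "k1 + 1 \<in> B" using k1B by (simp add: B_def)
            hence "k1 + 1 \<le> k1" unfolding k1_def using fB by (rule Max_ge[rotated])
            thus False by simp
          qed
          hence "u (k1 + 1) = w (k1 + 1) * a k1" using eq[rule_format, of "k1 + 1"] by simp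
          moreover have "u (k1 + 1) = 0" using k1B above by (simp add: B_def)
          ultimately show False using w k1B by (simp add: B_def)
        qed
        show "\<exists>A. u (i0 + int 0) = c * A 0 \<and>
          (\<forall>t. u (i0 + int (Suc t)) = w (i0 + int (Suc t)) * A t + c * A (Suc t)) \<and> A (nat (T - i0)) = 0"
        proof (intro exI[of _ "\<lambda>t. a (i0 + int t)"] conjI allI)
          show "u (i0 + int 0) = c * a (i0 + int 0)" using eq[rule_format, of i0] lowa[of "i0 - 1"] by simp
          show "u (i0 + int (Suc t)) = w (i0 + int (Suc t)) * a (i0 + int t) + c * a (i0 + int (Suc t))" for t
            using eq[rule_format, of "i0 + int (Suc t)"] by simp
          show "a (i0 + int (nat (T - i0))) = 0" using upa iT by simp
        qed
      qed
    qed
    thus ?thesis by simp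
  qed
  thus False using i0S by (simp add: S_def)
qed

lemma fin_reindex:
  assumes "finite {i. f i \<noteq> (0::complex)}" and "m \<noteq> (0::int)"
  shows "finite {k. f (j + k * m) \<noteq> 0}"
proof -
  have "inj (\<lambda>k. j + k * m)" using assms(2) by (auto simp: inj_def)
  hence "finite ((\<lambda>k. j + k * m) -` {i. f i \<noteq> 0})" using assms(1) by (rule finite_vimageI[rotated])
  thus ?thesis by (simp add: vimage_def)
qed

lemma add_SV: assumes "x \<in> SV" "y \<in> SV" shows "sv_add x y \<in> SV"
proof -
  have a: "finite {k. fst x k \<noteq> 0}" "finite {k. snd x k \<noteq> 0}"
     "finite {k. fst y k \<noteq> 0}" "finite {k. snd y k \<noteq> 0}"
    using assms by (auto simp: SV_def split: prod.splits)
  have "{k. fst x k + fst y k \<noteq> 0} \<subseteq> {k. fst x k \<noteq> 0} \<union> {k. fst y k \<noteq> 0}" by auto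
  hence 1: "finite {k. fst x k + fst y k \<noteq> 0}" using a by (meson finite_UnI rev_finite_subset)
  have "{k. snd x k + snd y k \<noteq> 0} \<subseteq> {k. snd x k \<noteq> 0} \<union> {k. snd y k \<noteq> 0}" by auto
  hence 2: "finite {k. snd x k + snd y k \<noteq> 0}" using a by (meson finite_UnI rev_finite_subset)
  show ?thesis using 1 2 by (simp add: sv_add_def SV_def)
qed

theorem lemma3p4:
  fixes \<Delta> :: "sv \<Rightarrow> sv" and m :: int
  assumes "local_der \<Delta>" and "\<Delta> (Gb 0) = sv_zero" and "m \<noteq> 0"
  shows "fst (\<Delta> (Gb m)) = (\<lambda>_. 0) \<and> (\<forall>n. snd (\<Delta> (Gb m)) n \<noteq> 0 \<longrightarrow> m dvd n)"
proof -
  have linD: "sv_linear \<Delta>" using assms(1) by (simp add: local_der_def)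
  define u where "u = \<Delta> (Gb m)"
  have uSV: "u \<in> SV" unfolding u_def using linD by (simp add: lin_SV)
  have fu1: "finite {i. fst u i \<noteq> 0}" and fu2: "finite {i. snd u i \<noteq> 0}"
    using uSV by (auto simp: SV_def split: prod.splits)
  have decomp: "\<exists>D0 D1. even_der D0 \<and> odd_der D1 \<and>
      (\<forall>k. fst u k = fst (D1 (Gb m)) k + c * fst (D1 (Gb 0)) k) \<and>
      (\<forall>k. snd u k = snd (D0 (Gb m)) k + c * snd (D0 (Gb 0)) k)" for c
  proof -
    define x where "x = sv_add (Gb m) (sv_smul c (Gb 0))"
    have smSV: "sv_smul c (Gb 0) \<in> SV" using linD by (simp add: sv_smul_def SV_def Gb_def delta_def)
    have xSV: "x \<in> SV" unfolding x_def using smSV by (simp add: add_SV)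
    have "\<Delta> x = sv_add u (sv_smul c sv_zero)"
      unfolding x_def u_def using linD smSV by (simp add: lin_add lin_smul assms(2))
    hence Dx: "\<Delta> x = u" by (simp add: sv_add_def sv_smul_def sv_zero_def)
    obtain D where sD: "sv_der D" and DxE: "\<Delta> x = D x" using assms(1) xSV by (auto simp: local_der_def)
    obtain D0 D1 where e0: "even_der D0" and o1: "odd_der D1" and Dsum: "\<forall>y\<in>SV. D y = sv_add (D0 y) (D1 y)"
      using sD by (auto simp: sv_der_def)
    have l0: "sv_linear D0" using e0 by (rule ev_lin)
    have l1: "sv_linear D1" using o1 by (rule od_lin)
    have "u = sv_add (sv_add (D0 (Gb m)) (sv_smul c (D0 (Gb 0)))) (sv_add (D1 (Gb m)) (sv_smul c (D1 (Gb 0))))"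
      using Dx DxE Dsum xSV smSV l0 l1 unfolding x_def by (simp add: lin_add lin_smul)
    hence "fst u k = fst (D1 (Gb m)) k + c * fst (D1 (Gb 0)) k \<and>
           snd u k = snd (D0 (Gb m)) k + c * snd (D0 (Gb 0)) k" for k
      using ev_G[OF e0, of m] ev_G[OF e0, of 0] od_G[OF o1, of m] od_G[OF o1, of 0]
      by (simp add: sv_add_def sv_smul_def)
    thus ?thesis using e0 o1 by blast
  qed
  have L: "fst u j = 0" for j
  proof -
    have "(\<lambda>k. fst u (j + k * m)) 0 = 0"
    proof (rule zlemma[where w = "\<lambda>_. 1" and u = "\<lambda>k. fst u (j + k * m)" and k = 0])
      show "finite {k. fst u (j + k * m) \<noteq> 0}" using fin_reindex[OF fu1 assms(3)] by simp
      show "\<forall>k. (1::complex) \<noteq> 0" by simp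
      show "\<forall>c. c \<noteq> 0 \<longrightarrow> (\<exists>a. finite {k. a k \<noteq> 0} \<and>
               (\<forall>k. fst u (j + k * m) = 1 * a (k - 1) + c * a k))"
      proof (intro allI impI)
        fix c :: complex
        obtain D0 D1 where e0: "even_der D0" and o1: "odd_der D1" and
          F: "\<forall>k. fst u k = fst (D1 (Gb m)) k + c * fst (D1 (Gb 0)) k" using decomp[of c] by blast
        have qSV: "D1 (Gb 0) \<in> SV" using od_lin[OF o1] by (simp add: lin_SV)
        hence fq: "finite {i. fst (D1 (Gb 0)) i \<noteq> 0}" by (auto simp: SV_def split: prod.splits)
        show "\<exists>a. finite {k. a k \<noteq> 0} \<and> (\<forall>k. fst u (j + k * m) = 1 * a (k - 1) + c * a k)"
        proof (intro exI[of _ "\<lambda>k. fst (D1 (Gb 0)) (j + k * m)"] conjI allI)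
          show "finite {k. fst (D1 (Gb 0)) (j + k * m) \<noteq> 0}" using fin_reindex[OF fq assms(3)] by simp
          fix k
          have "j + (k - 1) * m = j + k * m - m" by (simp add: algebra_simps)
          thus "fst u (j + k * m) = 1 * fst (D1 (Gb 0)) (j + (k - 1) * m) + c * fst (D1 (Gb 0)) (j + k * m)"
            using F D1_all[OF o1 assms(3), of "j + k * m"] by (simp only: \<open>j + (k - 1) * m = j + k * m - m\<close>) simp
        qed
      qed
    qed
    thus ?thesis by simp
  qed
  have G: "snd u j = 0" if nd: "\<not> m dvd j" for j
  proof -
    have nz: "j + k * m - m \<noteq> 0" "j + k * m - 3 * m \<noteq> 0" for k
    proof -
      show "j + k * m - m \<noteq> 0"
      proof
        assume "j + k * m - m = 0"
        hence "j = m * (1 - k)" by (simp add: algebra_simps)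
        thus False using nd by simp
      qed
      show "j + k * m - 3 * m \<noteq> 0"
      proof
        assume "j + k * m - 3 * m = 0"
        hence "j = m * (3 - k)" by (simp add: algebra_simps)
        thus False using nd by simp
      qed
    qed
    define w where "w k = (of_int (j + k * m - 3 * m) / of_int (j + k * m - m) :: complex)" for k
    have "(\<lambda>k. snd u (j + k * m)) 0 = 0"
    proof (rule zlemma[where w = w and u = "\<lambda>k. snd u (j + k * m)" and k = 0])
      show "finite {k. snd u (j + k * m) \<noteq> 0}" using fin_reindex[OF fu2 assms(3)] by simp
      show "\<forall>k. w k \<noteq> 0"
      proof
        fix k
        have "(of_int (j + k * m - 3 * m) :: complex) \<noteq> 0" "(of_int (j + k * m - m) :: complex) \<noteq> 0"
          using nz[of k] by (simp_all only: of_int_eq_0_iff) simp_all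
        thus "w k \<noteq> 0" unfolding w_def by simp
      qed
      show "\<forall>c. c \<noteq> 0 \<longrightarrow> (\<exists>a. finite {k. a k \<noteq> 0} \<and>
               (\<forall>k. snd u (j + k * m) = w k * a (k - 1) + c * a k))"
      proof (intro allI impI)
        fix c :: complex
        obtain D0 D1 where e0: "even_der D0" and o1: "odd_der D1" and
          F: "\<forall>k. snd u k = snd (D0 (Gb m)) k + c * snd (D0 (Gb 0)) k" using decomp[of c] by blast
        have pSV: "D0 (Gb 0) \<in> SV" using ev_lin[OF e0] by (simp add: lin_SV)
        hence fp: "finite {i. snd (D0 (Gb 0)) i \<noteq> 0}" by (auto simp: SV_def split: prod.splits)
        show "\<exists>a. finite {k. a k \<noteq> 0} \<and> (\<forall>k. snd u (j + k * m) = w k * a (k - 1) + c * a k)"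
        proof (intro exI[of _ "\<lambda>k. snd (D0 (Gb 0)) (j + k * m)"] conjI allI)
          show "finite {k. snd (D0 (Gb 0)) (j + k * m) \<noteq> 0}" using fin_reindex[OF fp assms(3)] by simp
          fix k
          have idx: "j + (k - 1) * m = j + k * m - m" by (simp add: algebra_simps)
          have d: "(of_int (j + k * m) - of_int m :: complex) \<noteq> 0"
            using nz(1)[of k] by (metis of_int_diff of_int_eq_0_iff)
          have e: "(of_int (j + k * m) - of_int m) * snd (D0 (Gb m)) (j + k * m)
               = (of_int (j + k * m) - 3 * of_int m) * snd (D0 (Gb 0)) (j + k * m - m)"
            using D0_fact[OF e0] .
          have "snd (D0 (Gb m)) (j + k * m) = w k * snd (D0 (Gb 0)) (j + k * m - m)"
            using e d unfolding w_def by (simp add: field_simps of_int_diff)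
          thus "snd u (j + k * m) = w k * snd (D0 (Gb 0)) (j + (k - 1) * m) + c * snd (D0 (Gb 0)) (j + k * m)"
            using F by (simp only: idx)
        qed
      qed
    qed
    thus ?thesis by simp
  qed
  show ?thesis using L G unfolding u_def by auto
qed

end
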